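(* Let $W$ be a stopping time in $\mathcal{T}$ and let $0<\rho<1$. Then $Cap_{\mathcal{T}}\widehat{W_{\mathcal{T}}^{\rho}}\le\rho^{-2}Cap_{\mathcal{T}}W$.
   Context: Tree. $\mathcal{T}$ is the rooted dyadic tree whose vertices are the dyadic arcs of the unit circle. The root $o$ is the whole circle. The vertices at level $n\ge0$ are the arcs $\{e^{it}:2\pi j2^{-n}\le t<2\pi(j+1)2^{-n}\}$ for $0\le j<2^n$. The two children $x_+,x_-$ of a vertex $x$ are the two arcs at the next level contained in it, and $x^{-1}$ denotes the parent. Write $y\le x$ if $x$ lies in the subtree rooted at $y$, and $y<x$ if moreover $y\ne x$. $[o,x]=\{y:y\le x\}$ is the geodesic from the root. A stopping time is a set of pairwise incomparable vertices. $\mathcal{G}(\{o\},W)$ is the union of the geodesics $[o,w]$, $w\in W$. Capacity. For $f:\mathcal{T}\to\mathbb{R}$ put $If(x)=\sum_{y\in[o,x]}f(y)$, and define $Cap_{\mathcal{T}}(W)=\inf\{\|f\|_{\ell^2(\mathcal{T})}^2: If\ge1\text{ on }W\}$. For a stopping time $W$ there is a unique minimizer $h$, and $H=Ih$ satisfies $H=1$ on $W$ and $\|h\|_{\ell^2}^2=Cap_{\mathcal{T}}W$. Capacitary blowup. For $0<\rho<1$, the capacitary blowup is $\widehat{W_{\mathcal{T}}^{\rho}}=\{t\in\mathcal{G}(\{o\},W):H(t)\ge\rho\text{ and }H(x)\le\rho\text{ for all }x<t\}$. *)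

theory Defs
  imports "HOL-Analysis.Analysis" "HOL-Library.Sublist"
begin

text \<open>Vertices of the rooted dyadic tree are encoded as binary words (bool lists):
  the root o is the empty word, the two children of x are x @ [True] and x @ [False]
  (the two dyadic sub-arcs), and y \<le> x in the tree order iff y is a prefix of x.\<close>

type_synonym vertex = "bool list"

definition tree_root :: vertex where "tree_root = []"

definition geodesic :: "vertex \<Rightarrow> vertex set" where
  "geodesic x = {y. prefix y x}"

definition stopping_time :: "vertex set \<Rightarrow> bool" where
  "stopping_time W \<longleftrightarrow> (\<forall>x\<in>W. \<forall>y\<in>W. x \<noteq> y \<longrightarrow> \<not> prefix x y \<and> \<not> prefix y x)"

definition geodesic_hull :: "vertex set \<Rightarrow> vertex set" where
  "geodesic_hull W = (\<Union>w\<in>W. geodesic w)"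

definition tree_I :: "(vertex \<Rightarrow> real) \<Rightarrow> vertex \<Rightarrow> real" where
  "tree_I f x = (\<Sum>y\<in>geodesic x. f y)"

definition l2_norm_sq :: "(vertex \<Rightarrow> real) \<Rightarrow> ennreal" where
  "l2_norm_sq f = (\<Sum>\<^sub>\<infinity>x. ennreal ((f x)\<^sup>2))"

definition tree_cap :: "vertex set \<Rightarrow> ennreal" where
  "tree_cap W = Inf {l2_norm_sq f | f. \<forall>w\<in>W. tree_I f w \<ge> 1}"

definition cap_minimizer :: "vertex set \<Rightarrow> vertex \<Rightarrow> real" where
  "cap_minimizer W = (THE h. (\<forall>w\<in>W. tree_I h w \<ge> 1) \<and> l2_norm_sq h = tree_cap W)"

definition cap_potential :: "vertex set \<Rightarrow> vertex \<Rightarrow> real" where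
  "cap_potential W = tree_I (cap_minimizer W)"

definition cap_blowup :: "vertex set \<Rightarrow> real \<Rightarrow> vertex set" where
  "cap_blowup W \<rho> = {t \<in> geodesic_hull W. cap_potential W t \<ge> \<rho> \<and>
      (\<forall>x. strict_prefix x t \<longrightarrow> cap_potential W x \<le> \<rho>)}"

end

theory Submission
  imports Defs
begin

definition adm :: "vertex set \<Rightarrow> (vertex \<Rightarrow> real) \<Rightarrow> bool" where
  "adm W f \<longleftrightarrow> (\<forall>w\<in>W. tree_I f w \<ge> 1)"

lemma finite_geodesic: "finite (geodesic x)"
proof -
  have "geodesic x = set (prefixes x)" unfolding geodesic_def by auto
  thus ?thesis by simp
qed

lemma Nsup: "l2_norm_sq f = (SUP F\<in>{F. finite F \<and> F \<subseteq> UNIV}. ennreal (\<Sum>x\<in>F. (f x)\<^sup>2))"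
  unfolding l2_norm_sq_def
  by (subst nonneg_infsum_complete) auto

lemma Nfin:
  assumes "l2_norm_sq f < top"
  shows "(\<lambda>x. (f x)\<^sup>2) summable_on UNIV"
proof (rule nonneg_bdd_above_summable_on)
  show "bdd_above ((sum (\<lambda>x. (f x)\<^sup>2)) ` {F. F \<subseteq> UNIV \<and> finite F})"
  proof (rule bdd_aboveI2)
    fix F :: "vertex set" assume "F \<in> {F. F \<subseteq> UNIV \<and> finite F}"
    hence "ennreal (\<Sum>x\<in>F. (f x)\<^sup>2) \<le> l2_norm_sq f"
      unfolding Nsup by (intro SUP_upper) auto
    also have "\<dots> = ennreal (enn2real (l2_norm_sq f))" using assms by simp
    finally show "(\<Sum>x\<in>F. (f x)\<^sup>2) \<le> enn2real (l2_norm_sq f)"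
      by (simp add: sum_nonneg)
  qed
qed auto

lemma Nreal:
  assumes "(\<lambda>x. (f x)\<^sup>2) summable_on UNIV"
  shows "l2_norm_sq f = ennreal (\<Sum>\<^sub>\<infinity>x. (f x)\<^sup>2)"
  unfolding Nsup by (subst infsum_nonneg_is_SUPREMUM_ennreal[OF assms]) auto

lemma Nscale:
  assumes "c \<ge> 0"
  shows "l2_norm_sq (\<lambda>x. c * f x) = ennreal (c\<^sup>2) * l2_norm_sq f"
proof -
  have "\<And>F. ennreal (\<Sum>x\<in>F. (c * f x)\<^sup>2) = ennreal (c\<^sup>2) * ennreal (\<Sum>x\<in>F. (f x)\<^sup>2)"
    by (simp add: power_mult_distrib sum_distrib_left[symmetric] ennreal_mult sum_nonneg)
  thus ?thesis unfolding Nsup by (simp add: SUP_mult_left_ennreal)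
qed

lemma tree_I_mid: "tree_I (\<lambda>x. (f x + g x) / 2) w = (tree_I f w + tree_I g w) / 2"
  unfolding tree_I_def by (simp add: sum_divide_distrib[symmetric] sum.distrib)

lemma adm_mid: "adm W f \<Longrightarrow> adm W g \<Longrightarrow> adm W (\<lambda>x. (f x + g x) / 2)"
  unfolding adm_def tree_I_mid by fastforce

lemma ineq1: "((a+b)/2)^2 \<le> ((a::real)^2+b^2)/2"
proof -
  have "0 \<le> (a-b)^2" by simp
  thus ?thesis by (simp add: power2_eq_square field_simps)
qed
lemma ineq2: "((a-b)/2)^2 \<le> ((a::real)^2+b^2)/2"
proof -
  have "0 \<le> (a+b)^2" by simp
  thus ?thesis by (simp add: power2_eq_square field_simps)
qed

lemma parallelogram:
  fixes f g :: "vertex \<Rightarrow> real"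
  assumes f: "(\<lambda>x. (f x)\<^sup>2) summable_on UNIV" and g: "(\<lambda>x. (g x)\<^sup>2) summable_on UNIV"
  shows "(\<lambda>x. ((f x + g x)/2)\<^sup>2) summable_on UNIV"
    "(\<lambda>x. ((f x - g x)/2)\<^sup>2) summable_on UNIV"
    "(\<Sum>\<^sub>\<infinity>x. ((f x + g x)/2)\<^sup>2) + (\<Sum>\<^sub>\<infinity>x. ((f x - g x)/2)\<^sup>2)
      = ((\<Sum>\<^sub>\<infinity>x. (f x)\<^sup>2) + (\<Sum>\<^sub>\<infinity>x. (g x)\<^sup>2)) / 2"
proof -
  have s: "(\<lambda>x. ((f x)\<^sup>2 + (g x)\<^sup>2) / 2) summable_on UNIV"
    using summable_on_cmult_left[OF summable_on_add[OF f g], of "1/2"] by simp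
  show s1: "(\<lambda>x. ((f x + g x)/2)\<^sup>2) summable_on UNIV"
    by (rule summable_on_comparison_test[OF s])
       (rule ineq1, simp)
  show s2: "(\<lambda>x. ((f x - g x)/2)\<^sup>2) summable_on UNIV"
    by (rule summable_on_comparison_test[OF s])
       (rule ineq2, simp)
  have "(\<Sum>\<^sub>\<infinity>x. ((f x + g x)/2)\<^sup>2) + (\<Sum>\<^sub>\<infinity>x. ((f x - g x)/2)\<^sup>2)
      = (\<Sum>\<^sub>\<infinity>x. ((f x + g x)/2)\<^sup>2 + ((f x - g x)/2)\<^sup>2)"
    by (rule infsum_add[OF s1 s2, symmetric])
  also have "\<dots> = (\<Sum>\<^sub>\<infinity>x. ((f x)\<^sup>2 + (g x)\<^sup>2) * (1/2))"
    by (rule infsum_cong) (simp add: power2_eq_square field_simps)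
  also have "\<dots> = (\<Sum>\<^sub>\<infinity>x. (f x)\<^sup>2 + (g x)\<^sup>2) * (1/2)"
    by (rule infsum_cmult_left) (use summable_on_add[OF f g] in simp)
  also have "\<dots> = ((\<Sum>\<^sub>\<infinity>x. (f x)\<^sup>2) + (\<Sum>\<^sub>\<infinity>x. (g x)\<^sup>2)) / 2"
    by (simp add: infsum_add[OF f g])
  finally show "(\<Sum>\<^sub>\<infinity>x. ((f x + g x)/2)\<^sup>2) + (\<Sum>\<^sub>\<infinity>x. ((f x - g x)/2)\<^sup>2)
      = ((\<Sum>\<^sub>\<infinity>x. (f x)\<^sup>2) + (\<Sum>\<^sub>\<infinity>x. (g x)\<^sup>2)) / 2" .
qed

lemma cap_lower: "adm W f \<Longrightarrow> tree_cap W \<le> l2_norm_sq f"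
  unfolding tree_cap_def adm_def by (intro Inf_lower) blast

lemma cap_lt_top: "tree_cap W < top"
proof -
  define f0 :: "vertex \<Rightarrow> real" where "f0 = (\<lambda>x. if x = [] then 1 else 0)"
  have "adm W f0"
    unfolding adm_def tree_I_def f0_def
    using finite_geodesic by (auto simp: geodesic_def sum.delta')
  moreover have "l2_norm_sq f0 \<le> 1"
    unfolding Nsup
  proof (rule SUP_least)
    fix F :: "vertex set" assume "F \<in> {F. finite F \<and> F \<subseteq> UNIV}"
    hence "finite F" by simp
    have "(\<Sum>x\<in>F. (f0 x)\<^sup>2) = (\<Sum>x\<in>F. if x = [] then 1 else 0)"
      unfolding f0_def by (intro sum.cong) auto
    also have "\<dots> \<le> 1" using \<open>finite F\<close> by (simp add: sum.delta')
    finally show "ennreal (\<Sum>x\<in>F. (f0 x)\<^sup>2) \<le> 1" by simp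
  qed
  ultimately have "tree_cap W \<le> 1" using cap_lower order_trans by blast
  thus ?thesis using order.strict_trans1 by fastforce
qed

lemma cap_real: "tree_cap W = ennreal (enn2real (tree_cap W))"
  using cap_lt_top by simp

lemma lowb:
  assumes "adm W g" "(\<lambda>x. (g x)\<^sup>2) summable_on UNIV"
  shows "enn2real (tree_cap W) \<le> (\<Sum>\<^sub>\<infinity>x. (g x)\<^sup>2)"
proof -
  have "ennreal (enn2real (tree_cap W)) \<le> ennreal (\<Sum>\<^sub>\<infinity>x. (g x)\<^sup>2)"
    using cap_lower[OF assms(1)] Nreal[OF assms(2)] cap_real by metis
  moreover have "0 \<le> (\<Sum>\<^sub>\<infinity>x. (g x)\<^sup>2)" by (rule infsum_nonneg) simp
  ultimately show ?thesis by simp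
qed

lemma minimizer_unique:
  assumes "adm W h1" "l2_norm_sq h1 = tree_cap W" "adm W h2" "l2_norm_sq h2 = tree_cap W"
  shows "h1 = h2"
proof
  fix x
  define c where "c = enn2real (tree_cap W)"
  have s1: "(\<lambda>x. (h1 x)\<^sup>2) summable_on UNIV" using Nfin assms(2) cap_lt_top by metis
  have s2: "(\<lambda>x. (h2 x)\<^sup>2) summable_on UNIV" using Nfin assms(4) cap_lt_top by metis
  have e1: "(\<Sum>\<^sub>\<infinity>x. (h1 x)\<^sup>2) = c"
  proof -
    have "ennreal (\<Sum>\<^sub>\<infinity>x. (h1 x)\<^sup>2) = ennreal c"
      using Nreal[OF s1] assms(2) cap_real c_def by metis
    moreover have "0 \<le> (\<Sum>\<^sub>\<infinity>x. (h1 x)\<^sup>2)" by (rule infsum_nonneg) simp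
    ultimately show ?thesis using c_def by (simp add: ennreal_inj)
  qed
  have e2: "(\<Sum>\<^sub>\<infinity>x. (h2 x)\<^sup>2) = c"
  proof -
    have "ennreal (\<Sum>\<^sub>\<infinity>x. (h2 x)\<^sup>2) = ennreal c"
      using Nreal[OF s2] assms(4) cap_real c_def by metis
    moreover have "0 \<le> (\<Sum>\<^sub>\<infinity>x. (h2 x)\<^sup>2)" by (rule infsum_nonneg) simp
    ultimately show ?thesis using c_def by (simp add: ennreal_inj)
  qed
  note P = parallelogram[OF s1 s2]
  have "c \<le> (\<Sum>\<^sub>\<infinity>x. ((h1 x + h2 x)/2)\<^sup>2)"
    unfolding c_def by (rule lowb[OF adm_mid[OF assms(1,3)] P(1)])
  moreover have "(\<Sum>\<^sub>\<infinity>x. ((h1 x + h2 x)/2)\<^sup>2) + (\<Sum>\<^sub>\<infinity>x. ((h1 x - h2 x)/2)\<^sup>2) = c"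
    using P(3) unfolding e1 e2 by simp
  ultimately have "(\<Sum>\<^sub>\<infinity>x. ((h1 x - h2 x)/2)\<^sup>2) \<le> 0" by linarith
  hence "((h1 x - h2 x)/2)\<^sup>2 = 0"
    by (rule nonneg_infsum_le_0D[OF _ P(2)]) auto
  thus "h1 x = h2 x" by simp
qed


lemma minimizer_exists: "\<exists>h. adm W h \<and> l2_norm_sq h = tree_cap W"
proof -
  define c where "c = enn2real (tree_cap W)"
  have cc: "tree_cap W = ennreal c" using cap_real c_def by metis
  have c0: "0 \<le> c" unfolding c_def by simp
  have "\<forall>n. \<exists>f. adm W f \<and> l2_norm_sq f < ennreal (c + inverse (real (Suc n)))"
  proof
    fix n
    have "tree_cap W < ennreal (c + inverse (real (Suc n)))"
      using cc c0 by (simp add: ennreal_less_iff)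
    then obtain y where "y \<in> {l2_norm_sq f | f. \<forall>w\<in>W. tree_I f w \<ge> 1}"
      "y < ennreal (c + inverse (real (Suc n)))"
      unfolding tree_cap_def Inf_less_iff by blast
    thus "\<exists>f. adm W f \<and> l2_norm_sq f < ennreal (c + inverse (real (Suc n)))"
      unfolding adm_def by blast
  qed
  then obtain fs where fs: "\<And>n. adm W (fs n)"
    "\<And>n. l2_norm_sq (fs n) < ennreal (c + inverse (real (Suc n)))" by metis
  have summ: "\<And>n. (\<lambda>x. (fs n x)\<^sup>2) summable_on UNIV"
    using fs(2) Nfin ennreal_less_top order.strict_trans by metis
  define a where "a n = (\<Sum>\<^sub>\<infinity>x. (fs n x)\<^sup>2)" for n
  have a0: "0 \<le> a n" for n unfolding a_def by (rule infsum_nonneg) simp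
  have a_up: "a n < c + inverse (real (Suc n))" for n
    using fs(2)[of n] Nreal[OF summ[of n]] a0[of n] unfolding a_def
    by (simp add: ennreal_less_iff)
  have a_lo: "c \<le> a n" for n unfolding a_def c_def by (rule lowb[OF fs(1) summ])
  have pt: "((fs n x - fs m x)/2)\<^sup>2 \<le> (inverse (real (Suc n)) + inverse (real (Suc m)))/2"
    for n m x
  proof -
    note P = parallelogram[OF summ[of n] summ[of m]]
    define A where "A = (\<Sum>\<^sub>\<infinity>y. ((fs n y + fs m y)/2)\<^sup>2)"
    define B where "B = (\<Sum>\<^sub>\<infinity>y. ((fs n y - fs m y)/2)\<^sup>2)"
    have 1: "c \<le> A"
      unfolding c_def A_def by (rule lowb[OF adm_mid[OF fs(1) fs(1)] P(1)])
    have 2: "A + B = (a n + a m) / 2" using P(3) unfolding a_def A_def B_def by simp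
    have 3: "((fs n x - fs m x)/2)\<^sup>2 \<le> B"
      unfolding B_def using finite_sum_le_infsum[OF P(2), of "{x}"] by simp
    have 4: "a n < c + inverse (real (Suc n))" "a m < c + inverse (real (Suc m))" using a_up by auto
    define p where "p = inverse (real (Suc n))"
    define q where "q = inverse (real (Suc m))"
    define d where "d = ((fs n x - fs m x)/2)\<^sup>2"
    from 1 2 3 4 have "d \<le> (p + q) / 2" unfolding p_def[symmetric] q_def[symmetric] d_def[symmetric] by argo
    thus ?thesis unfolding p_def q_def d_def .
  qed
  have cauchy: "Cauchy (\<lambda>n. fs n x)" for x
    unfolding Cauchy_def
  proof (intro allI impI)
    fix e :: real assume e: "0 < e"
    then obtain M where M: "inverse (real (Suc M)) < e\<^sup>2 / 4"
      using reals_Archimedean[of "e\<^sup>2/4"] by auto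
    show "\<exists>M. \<forall>m\<ge>M. \<forall>n\<ge>M. dist (fs m x) (fs n x) < e"
    proof (intro exI allI impI)
      fix m n assume mn: "M \<le> m" "M \<le> n"
      have im: "inverse (real (Suc m)) \<le> inverse (real (Suc M))"
        using mn by (simp add: le_imp_inverse_le)
      have iN: "inverse (real (Suc n)) \<le> inverse (real (Suc M))"
        using mn by (simp add: le_imp_inverse_le)
      have "((fs m x - fs n x)/2)\<^sup>2 < e\<^sup>2 / 4" using pt[of m x n] im iN M by argo
      hence "(fs m x - fs n x)\<^sup>2 < e\<^sup>2" by (simp add: power_divide)
      hence "\<bar>fs m x - fs n x\<bar>\<^sup>2 < e\<^sup>2" by simp
      hence "\<bar>fs m x - fs n x\<bar> < e" using e by (meson abs_ge_zero power_less_imp_less_base less_le)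
      thus "dist (fs m x) (fs n x) < e" by (simp add: dist_real_def)
    qed
  qed
  define f where "f x = lim (\<lambda>n. fs n x)" for x
  have conv: "(\<lambda>n. fs n x) \<longlonglongrightarrow> f x" for x
    unfolding f_def using cauchy[of x] Cauchy_convergent_iff convergent_LIMSEQ_iff by blast
  have admf: "adm W f"
    unfolding adm_def
  proof
    fix w assume w: "w \<in> W"
    have "(\<lambda>n. tree_I (fs n) w) \<longlonglongrightarrow> tree_I f w"
      unfolding tree_I_def by (intro tendsto_sum conv)
    moreover have "\<forall>n. 1 \<le> tree_I (fs n) w" using fs(1) w unfolding adm_def by blast
    ultimately show "1 \<le> tree_I f w" by (meson LIMSEQ_le_const)
  qed
  have "l2_norm_sq f \<le> ennreal c"
    unfolding Nsup
  proof (rule SUP_least)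
    fix F :: "vertex set" assume "F \<in> {F. finite F \<and> F \<subseteq> UNIV}"
    hence F: "finite F" by simp
    have "(\<lambda>n. \<Sum>x\<in>F. (fs n x)\<^sup>2) \<longlonglongrightarrow> (\<Sum>x\<in>F. (f x)\<^sup>2)"
      by (intro tendsto_sum tendsto_power conv)
    moreover have "(\<lambda>n. c + inverse (real (Suc n))) \<longlonglongrightarrow> c"
      by (rule LIMSEQ_inverse_real_of_nat_add)
    moreover have "\<forall>n. (\<Sum>x\<in>F. (fs n x)\<^sup>2) \<le> c + inverse (real (Suc n))"
    proof
      fix n
      have "(\<Sum>x\<in>F. (fs n x)\<^sup>2) \<le> a n"
        unfolding a_def using finite_sum_le_infsum[OF summ[of n] F] by simp
      thus "(\<Sum>x\<in>F. (fs n x)\<^sup>2) \<le> c + inverse (real (Suc n))" using a_up[of n] by linarith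
    qed
    ultimately have "(\<Sum>x\<in>F. (f x)\<^sup>2) \<le> c" by (meson LIMSEQ_le)
    thus "ennreal (\<Sum>x\<in>F. (f x)\<^sup>2) \<le> ennreal c" by (simp add: ennreal_leI)
  qed
  hence "l2_norm_sq f = tree_cap W" using cap_lower[OF admf] cc by simp
  thus ?thesis using admf by blast
qed



lemma minimizer_prop: "adm W (cap_minimizer W) \<and> l2_norm_sq (cap_minimizer W) = tree_cap W"
proof -
  have "\<exists>!h. (\<forall>w\<in>W. tree_I h w \<ge> 1) \<and> l2_norm_sq h = tree_cap W"
    using minimizer_exists[of W] minimizer_unique[of W] unfolding adm_def by blast
  hence "(\<forall>w\<in>W. tree_I (cap_minimizer W) w \<ge> 1) \<and> l2_norm_sq (cap_minimizer W) = tree_cap W"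
    unfolding cap_minimizer_def by (rule theI')
  thus ?thesis unfolding adm_def .
qed

theorem mainTheorem3:
  fixes W :: "vertex set" and \<rho> :: real
  assumes "stopping_time W" and "0 < \<rho>" and "\<rho> < 1"
  shows "tree_cap (cap_blowup W \<rho>) \<le> ennreal (1 / \<rho>\<^sup>2) * tree_cap W"
proof -
  define h where "h = cap_minimizer W"
  define g where "g = (\<lambda>x. (1/\<rho>) * h x)"
  have "adm (cap_blowup W \<rho>) g"
    unfolding adm_def
  proof
    fix t assume "t \<in> cap_blowup W \<rho>"
    hence "\<rho> \<le> tree_I h t" unfolding cap_blowup_def cap_potential_def h_def by blast
    moreover have "tree_I g t = (1/\<rho>) * tree_I h t"
      unfolding g_def tree_I_def by (simp add: sum_distrib_left)
    ultimately have "\<rho> * 1 \<le> \<rho> * tree_I g t" using assms(2) by simp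
    thus "1 \<le> tree_I g t" using assms(2) by (simp only: mult_le_cancel_left_pos)
  qed
  hence "tree_cap (cap_blowup W \<rho>) \<le> l2_norm_sq g" by (rule cap_lower)
  also have "\<dots> = ennreal ((1/\<rho>)\<^sup>2) * l2_norm_sq h"
    unfolding g_def by (rule Nscale) (use assms(2) in simp)
  also have "\<dots> = ennreal (1 / \<rho>\<^sup>2) * tree_cap W"
    using minimizer_prop[of W] unfolding h_def by (simp add: power_divide)
  finally show ?thesis .
qed

end
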